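(* Let $\epsilon>0$ be sufficiently small, and for $(\phi,\theta)$ spherical-polar coordinates on $S^2$ let $L_s(\phi,\theta)\in R(T^2,2)$ be as defined in the context, with $\nu=\epsilon\sin\phi$ and $D=\cos^2\nu+\sin^2\nu\sin^2\theta$. On the set $\{y\neq0\}=\{\phi\in(0,\pi),\ \theta\notin\{0,\pi\}\}$ the map $(\phi,\theta)\mapsto L_s(\phi,\theta)$ is injective and takes values in $P_4$. Moreover, writing $\hat a,\hat b$ for the unit vectors with $a=i\hat a\cdot\vec\sigma$, $b=i\hat b\cdot\vec\sigma$ in the normalized representative of $L_s(\phi,\theta)$: for $\theta\in(0,\pi)$, $$\hat a=(-\sin(\phi+\nu),-\cos(\phi+\nu),0),$$ $$\hat b=D^{-1}\Big(\cos^2\nu\cos^2\theta\sin(\phi+\nu)+\sin^2\theta\sin(\phi-\nu),\ \cos^2\nu\cos^2\theta\cos(\phi+\nu)+\sin^2\theta\cos(\phi-\nu),\ -\tfrac12\sin 2\nu\sin2\theta\Big),$$ and for $\theta\in(\pi,2\pi)$, $$\hat a=(\sin(\phi+\nu),\cos(\phi+\nu),0),$$ $$\hat b=D^{-1}\Big(-\cos^2\nu\cos^2\theta\sin(\phi+\nu)-\sin^2\theta\sin(\phi-\nu),\ -\cos^2\nu\cos^2\theta\cos(\phi+\nu)-\sin^2\theta\cos(\phi-\nu),\ -\tfrac12\sin 2\nu\sin2\theta\Big).$$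
   Context: Pauli matrices standard; $[A,B]=ABA^{-1}B^{-1}$. $R(T^2,2)$ is the space of tuples $(A,B,a,b)\in SU(2)^4$ with $\operatorname{tr}a=\operatorname{tr}b=0$ and $[A,B]ab=1$ modulo simultaneous conjugation; $\mu([(A,B,a,b)])=\tfrac12\operatorname{tr}[A,B]$; $P_4=\mu^{-1}([-1,1))$. Every class in $P_4$ has a unique (normalized) representative with $A=r\cos\alpha+i\sigma_x\sqrt{1-r^2}+i\sigma_z r\sin\alpha$, $B=\cos\beta+i\sigma_z\sin\beta$, $\alpha\in[0,2\pi]$, $\beta\in(0,\pi)$, $r\in[0,1)$. Cartesian coordinates on $S^2$: $(x,y,z)=(\sin\phi\cos\theta,\sin\phi\sin\theta,\cos\phi)$. Sphere Lagrangian: for small $\epsilon>0$, $\nu=\epsilon\sin\phi$, define $L_s(\phi,\theta)=[(A,B,a,b)]\in R(T^2,2)$ where $a=i\sigma_z$, $h=(\cos^2\nu+\sin^2\nu\sin^2\theta)^{-1/2}(i\sigma_x\cos\nu-i\sigma_z\sin\nu\sin\theta)$, $A=h(\cos\phi+i\sin\phi(\sigma_x\cos\theta+\sigma_y\sin\theta))$, $B=\cos\nu+i\sin\nu(\sigma_x\cos\theta+\sigma_y\sin\theta)$, $b=-ha^{-1}h^{-1}$. (This is the image of the perturbed character variety $R_\pi^\natural(S^1\times D^2,A_1)\cong S^2$ under restriction to the boundary twice-punctured torus.) *)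

theory Defs
  imports "HOL-Analysis.Analysis"
begin

type_synonym cmat = "complex^2^2"

definition mat2 :: "complex \<Rightarrow> complex \<Rightarrow> complex \<Rightarrow> complex \<Rightarrow> cmat" where
  "mat2 p q r s = (\<chi> i j. if i = 1 then (if j = 1 then p else q) else (if j = 1 then r else s))"

definition csc :: "complex \<Rightarrow> cmat \<Rightarrow> cmat" where
  "csc c M = (\<chi> i j. c * M$i$j)"

definition ctrans :: "cmat \<Rightarrow> cmat" where
  "ctrans M = (\<chi> i j. cnj (M$j$i))"

definition sx :: cmat where "sx = mat2 0 1 1 0"
definition sy :: cmat where "sy = mat2 0 (-\<i>) \<i> 0"
definition sz :: cmat where "sz = mat2 1 0 0 (-1)"

definition SU2 :: "cmat set" where
  "SU2 = {U. U ** ctrans U = mat 1 \<and> det U = 1}"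

definition su2_of :: "real \<Rightarrow> real \<Rightarrow> real \<Rightarrow> real \<Rightarrow> cmat" where
  "su2_of w x y z = csc (complex_of_real w) (mat 1)
      + csc \<i> (csc (complex_of_real x) sx + csc (complex_of_real y) sy + csc (complex_of_real z) sz)"

definition comm :: "cmat \<Rightarrow> cmat \<Rightarrow> cmat" where
  "comm A B = A ** B ** matrix_inv A ** matrix_inv B"

type_synonym tuple4 = "cmat \<times> cmat \<times> cmat \<times> cmat"

text \<open>Tuples representing points of R(T^2,2) (before quotienting by conjugation).\<close>
definition in_R :: "tuple4 \<Rightarrow> bool" where
  "in_R t = (case t of (A, B, a, b) \<Rightarrow>
     A \<in> SU2 \<and> B \<in> SU2 \<and> a \<in> SU2 \<and> b \<in> SU2 \<and> trace a = 0 \<and> trace b = 0 \<and>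
     comm A B ** a ** b = mat 1)"

definition conj_equiv :: "tuple4 \<Rightarrow> tuple4 \<Rightarrow> bool" where
  "conj_equiv t t' = (case t of (A, B, a, b) \<Rightarrow> case t' of (A', B', a', b') \<Rightarrow>
     (\<exists>g \<in> SU2. A' = g ** A ** matrix_inv g \<and> B' = g ** B ** matrix_inv g \<and>
                a' = g ** a ** matrix_inv g \<and> b' = g ** b ** matrix_inv g))"

text \<open>mu = (1/2) tr [A,B]  (real for SU(2); we take the real part).\<close>
definition mu :: "tuple4 \<Rightarrow> real" where
  "mu t = (case t of (A, B, a, b) \<Rightarrow> Re (trace (comm A B)) / 2)"

definition in_P4 :: "tuple4 \<Rightarrow> bool" where
  "in_P4 t = (in_R t \<and> -1 \<le> mu t \<and> mu t < 1)"

definition normalized :: "tuple4 \<Rightarrow> bool" where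
  "normalized t = (case t of (A, B, a, b) \<Rightarrow>
     (\<exists>\<alpha> \<beta> r. 0 \<le> \<alpha> \<and> \<alpha> \<le> 2*pi \<and> 0 < \<beta> \<and> \<beta> < pi \<and> 0 \<le> r \<and> r < 1 \<and>
        A = su2_of (r * cos \<alpha>) (sqrt (1 - r\<^sup>2)) 0 (r * sin \<alpha>) \<and>
        B = su2_of (cos \<beta>) 0 0 (sin \<beta>)))"

definition Ls :: "real \<Rightarrow> real \<Rightarrow> real \<Rightarrow> tuple4" where
  "Ls \<epsilon> \<phi> \<theta> = (let \<nu> = \<epsilon> * sin \<phi>;
       n = csc (complex_of_real (cos \<theta>)) sx + csc (complex_of_real (sin \<theta>)) sy;
       h = csc (complex_of_real (1 / sqrt ((cos \<nu>)\<^sup>2 + (sin \<nu>)\<^sup>2 * (sin \<theta>)\<^sup>2)))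
             (csc \<i> (csc (complex_of_real (cos \<nu>)) sx - csc (complex_of_real (sin \<nu> * sin \<theta>)) sz));
       A = h ** (csc (complex_of_real (cos \<phi>)) (mat 1) + csc (\<i> * complex_of_real (sin \<phi>)) n);
       B = csc (complex_of_real (cos \<nu>)) (mat 1) + csc (\<i> * complex_of_real (sin \<nu>)) n;
       a = csc \<i> sz;
       b = - (h ** matrix_inv a ** matrix_inv h)
     in (A, B, a, b))"

end

theory Submission
  imports Defs
begin

lemma mat2_eq: "mat2 p q r s = mat2 p1 q1 r1 s1 \<longleftrightarrow> p = p1 \<and> q = q1 \<and> r = r1 \<and> s = s1"
  by (auto simp: mat2_def vec_eq_iff forall_2)

lemma su2_of_mat2: "su2_of w x y z = mat2 (complex_of_real w + \<i> * complex_of_real z) (\<i> * complex_of_real x + complex_of_real y)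
   (\<i> * complex_of_real x - complex_of_real y) (complex_of_real w - \<i> * complex_of_real z)"
  by (simp add: su2_of_def mat2_def csc_def sx_def sy_def sz_def vec_eq_iff forall_2 mat_def algebra_simps)

lemma mat2_mult: "mat2 p q r s ** mat2 p1 q1 r1 s1 = mat2 (p*p1+q*r1) (p*q1+q * s1) (r*p1+s * r1) (r*q1+s * s1)"
  by (simp add: mat2_def matrix_matrix_mult_def vec_eq_iff forall_2 sum_2)

lemma su2_mult: "su2_of w1 x1 y1 z1 ** su2_of w2 x2 y2 z2 = su2_of (w1*w2 - x1*x2 - y1*y2 - z1*z2)
   (w1*x2 + w2*x1 - (y1*z2 - z1*y2)) (w1*y2 + w2*y1 - (z1*x2 - x1*z2)) (w1*z2+w2*z1 - (x1*y2 - y1*x2))"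
  unfolding su2_of_mat2 mat2_mult mat2_eq
  by (simp add: complex_eq_iff algebra_simps)

lemma su2_eq: "su2_of w x y z = su2_of w' x' y' z' \<longleftrightarrow> w = w' \<and> x = x' \<and> y = y' \<and> z = z'"
  unfolding su2_of_mat2 mat2_eq by (auto simp: complex_eq_iff)

lemma su2_one: "su2_of 1 0 0 0 = mat 1"
  by (simp add: su2_of_mat2 mat2_def mat_def vec_eq_iff forall_2)

lemma su2_trace: "trace (su2_of w x y z) = 2 * complex_of_real w"
  by (simp add: su2_of_mat2 mat2_def trace_def sum_2)

lemma su2_det: "det (su2_of w x y z) = complex_of_real (w^2+x^2+y^2+z^2)"
  by (simp add: su2_of_mat2 mat2_def det_2 complex_eq_iff power2_eq_square algebra_simps)

lemma su2_ctrans: "ctrans (su2_of w x y z) = su2_of w (-x) (-y) (-z)"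
  by (simp add: su2_of_mat2 mat2_def ctrans_def vec_eq_iff forall_2 complex_eq_iff)

lemma inv_unique: fixes A B :: cmat assumes "A ** B = mat 1" "B ** A = mat 1" shows "matrix_inv A = B"
proof -
  have ex: "\<exists>A'. A ** A' = mat 1 \<and> A' ** A = mat 1" using assms by blast
  have "A ** matrix_inv A = mat 1 \<and> matrix_inv A ** A = mat 1"
    unfolding matrix_inv_def by (rule someI_ex[OF ex])
  hence "matrix_inv A = matrix_inv A ** (A ** B)" using assms by simp
  also have "\<dots> = B" using \<open>_ \<and> _\<close> by (simp add: matrix_mul_assoc)
  finally show ?thesis .
qed

definition unit4 :: "real \<Rightarrow> real \<Rightarrow> real \<Rightarrow> real \<Rightarrow> bool" where
  "unit4 w x y z \<longleftrightarrow> w^2+x^2+y^2+z^2 = 1"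

lemma su2_inv: "unit4 w x y z \<Longrightarrow> matrix_inv (su2_of w x y z) = su2_of w (-x) (-y) (-z)"
  apply (rule inv_unique)
  by (simp_all add: su2_mult su2_one[symmetric] su2_eq unit4_def power2_eq_square algebra_simps)

lemma su2_in_SU2: "unit4 w x y z \<Longrightarrow> su2_of w x y z \<in> SU2"
  by (simp add: SU2_def su2_ctrans su2_mult su2_det su2_one[symmetric] su2_eq unit4_def power2_eq_square algebra_simps)

lemma SU2_su2: assumes "U \<in> SU2" shows "\<exists>w x y z. unit4 w x y z \<and> U = su2_of w x y z"
proof -
  define a b c d where "a = U$1$1" "b = U$1$2" "c = U$2$1" "d = U$2$2"
  have U: "U = mat2 a b c d" by (simp add: a_b_c_d_def mat2_def vec_eq_iff forall_2)
  have m: "U ** ctrans U = mat 1" and dt: "det U = 1" using assms by (auto simp: SU2_def)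
  have e1: "a * cnj a + b * cnj b = 1" and e2: "a * cnj c + b * cnj d = 0"
    using m unfolding U by (simp_all add: mat2_def ctrans_def matrix_matrix_mult_def vec_eq_iff forall_2 sum_2 mat_def)
  have e3: "a*d - b*c = 1" using dt unfolding U by (simp add: det_2 mat2_def)
  have e2': "cnj a * c + cnj b * d = 0" using arg_cong[OF e2, of cnj] by (simp add: mult.commute)
  have "cnj a = d"
  proof -
    have "cnj a = cnj a * (a*d - b*c)" using e3 by simp
    also have "\<dots> = (a * cnj a + b * cnj b) * d - b * (cnj a * c + cnj b * d)" by (simp add: algebra_simps)
    finally show ?thesis using e1 e2' by simp
  qed
  moreover have "c = - cnj b"
  proof -
    have "- cnj b = - cnj b * (a*d - b*c)" using e3 by simp
    also have "\<dots> = (a * cnj a + b * cnj b) * c - a * (cnj a * c + cnj b * d)" by (simp add: algebra_simps)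
    finally show ?thesis using e1 e2' by simp
  qed
  ultimately have "U = su2_of (Re a) (Im b) (Re b) (Im a)"
    unfolding U su2_of_mat2 mat2_eq by (simp add: complex_eq_iff)
  moreover have "unit4 (Re a) (Im b) (Re b) (Im a)"
    using arg_cong[OF e1, of Re] by (simp add: unit4_def power2_eq_square algebra_simps)
  ultimately show ?thesis by blast
qed

lemma SU2_inv: "U \<in> SU2 \<Longrightarrow> matrix_inv U = ctrans U \<and> U ** matrix_inv U = mat 1 \<and> matrix_inv U ** U = mat 1 \<and> ctrans U \<in> SU2"
  apply (drule SU2_su2)
  apply clarify
  apply (simp add: su2_inv su2_ctrans su2_mult su2_one[symmetric] su2_eq)
  apply (auto simp: unit4_def power2_eq_square algebra_simps intro!: su2_in_SU2)
  done

lemma unit4_mult: assumes "unit4 w1 x1 y1 z1" "unit4 w2 x2 y2 z2" shows "unit4 (w1*w2 - x1*x2 - y1*y2 - z1*z2)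
   (w1*x2 + w2*x1 - (y1*z2 - z1*y2)) (w1*y2 + w2*y1 - (z1*x2 - x1*z2)) (w1*z2+w2*z1 - (x1*y2 - y1*x2))"
proof -
  have "(w1*w2 - x1*x2 - y1*y2 - z1*z2)^2 +
   (w1*x2 + w2*x1 - (y1*z2 - z1*y2))^2 + (w1*y2 + w2*y1 - (z1*x2 - x1*z2))^2 + (w1*z2+w2*z1 - (x1*y2 - y1*x2))^2
    = (w1^2+x1^2+y1^2+z1^2)*(w2^2+x2^2+y2^2+z2^2)" by algebra
  thus ?thesis using assms by (simp add: unit4_def)
qed

lemma SU2_mult: assumes "U \<in> SU2" "V \<in> SU2" shows "U ** V \<in> SU2"
proof -
  obtain w1 x1 y1 z1 where 1: "unit4 w1 x1 y1 z1" "U = su2_of w1 x1 y1 z1" using SU2_su2[OF assms(1)] by blast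
  obtain w2 x2 y2 z2 where 2: "unit4 w2 x2 y2 z2" "V = su2_of w2 x2 y2 z2" using SU2_su2[OF assms(2)] by blast
  show ?thesis unfolding 1 2 su2_mult by (rule su2_in_SU2[OF unit4_mult[OF 1(1) 2(1)]])
qed

lemma conj_back: fixes g ig A :: cmat assumes "g ** ig = mat 1" "ig ** g = mat 1"
  shows "ig ** (g ** A ** ig) ** g = A"
proof -
  have "ig ** (g ** A ** ig) ** g = (ig ** g) ** A ** (ig ** g)" by (simp add: matrix_mul_assoc)
  thus ?thesis using assms by simp
qed

lemma conj_comp: fixes g1 g2 i1 i2 A :: cmat assumes "i1 ** g1 = mat 1" "i2 ** g2 = mat 1"
  shows "g2 ** (g1 ** A ** i1) ** i2 = (g2 ** g1) ** A ** (i1 ** i2)"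
  by (simp add: matrix_mul_assoc)

lemma conj_sym: assumes "conj_equiv (A,B,a,b) (A',B',a',b')" shows "conj_equiv (A',B',a',b') (A,B,a,b)"
proof -
  obtain g where g: "g \<in> SU2" and e: "A' = g ** A ** matrix_inv g" "B' = g ** B ** matrix_inv g"
     "a' = g ** a ** matrix_inv g" "b' = g ** b ** matrix_inv g"
    using assms unfolding conj_equiv_def by auto
  have i: "g ** matrix_inv g = mat 1" "matrix_inv g ** g = mat 1" "matrix_inv g \<in> SU2"
    using SU2_inv[OF g] by auto
  have ii: "matrix_inv (matrix_inv g) = g" by (rule inv_unique) (use i in auto)
  show ?thesis unfolding conj_equiv_def prod.case
    apply (rule bexI[of _ "matrix_inv g"])
    unfolding e ii conj_back[OF i(1,2)] using i(3) by auto
qed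
lemma inv_prod: assumes "g1 \<in> SU2" "g2 \<in> SU2" shows "matrix_inv (g2 ** g1) = matrix_inv g1 ** matrix_inv g2"
proof (rule inv_unique)
  have a: "g1 ** matrix_inv g1 = mat 1" "matrix_inv g1 ** g1 = mat 1" "g2 ** matrix_inv g2 = mat 1" "matrix_inv g2 ** g2 = mat 1"
    using SU2_inv[OF assms(1)] SU2_inv[OF assms(2)] by blast+
  have "g2 ** g1 ** (matrix_inv g1 ** matrix_inv g2) = g2 ** (g1 ** matrix_inv g1) ** matrix_inv g2"
    by (simp add: matrix_mul_assoc)
  thus "g2 ** g1 ** (matrix_inv g1 ** matrix_inv g2) = mat 1" using a by simp
  have "matrix_inv g1 ** matrix_inv g2 ** (g2 ** g1) = matrix_inv g1 ** (matrix_inv g2 ** g2) ** g1"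
    by (simp add: matrix_mul_assoc)
  thus "matrix_inv g1 ** matrix_inv g2 ** (g2 ** g1) = mat 1" using a by simp
qed

lemma conj_trans: assumes "conj_equiv (A,B,a,b) (A',B',a',b')" "conj_equiv (A',B',a',b') (A'',B'',a'',b'')"
   shows "conj_equiv (A,B,a,b) (A'',B'',a'',b'')"
proof -
  obtain g where g: "g \<in> SU2" and e: "A' = g ** A ** matrix_inv g" "B' = g ** B ** matrix_inv g"
     "a' = g ** a ** matrix_inv g" "b' = g ** b ** matrix_inv g"
    using assms(1) unfolding conj_equiv_def by auto
  obtain h where h: "h \<in> SU2" and f: "A'' = h ** A' ** matrix_inv h" "B'' = h ** B' ** matrix_inv h"
     "a'' = h ** a' ** matrix_inv h" "b'' = h ** b' ** matrix_inv h"
    using assms(2) unfolding conj_equiv_def by auto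
  have c: "\<And>X. h ** (g ** X ** matrix_inv g) ** matrix_inv h = (h ** g) ** X ** matrix_inv (h ** g)"
    unfolding inv_prod[OF g h] by (simp add: matrix_mul_assoc)
  show ?thesis unfolding conj_equiv_def prod.case
    apply (rule bexI[of _ "h ** g"])
    unfolding f e c using SU2_mult[OF h g] by auto
qed

lemma scal_conj: assumes "w^2 = 1" shows "su2_of w 0 0 0 ** M ** su2_of w 0 0 0 = M"
proof -
  have w: "complex_of_real w * complex_of_real w = 1" using assms
    by (metis of_real_1 of_real_mult power2_eq_square)
  show ?thesis
    unfolding su2_of_mat2
    by (simp add: mat2_def matrix_matrix_mult_def vec_eq_iff forall_2 sum_2 mult.assoc[symmetric] w)
qed

lemma conj_mul: assumes "g \<in> SU2" "X' = g ** X ** matrix_inv g" shows "X' ** g = g ** X"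
proof -
  have "matrix_inv g ** g = mat 1" using SU2_inv[OF assms(1)] by blast
  hence "g ** X ** matrix_inv g ** g = g ** X" by (metis matrix_mul_assoc matrix_mul_rid)
  thus ?thesis using assms(2) by simp
qed

lemma conj_trace: assumes "g \<in> SU2" shows "trace (g ** X ** matrix_inv g) = trace X"
proof -
  have "matrix_inv g ** g = mat 1" using SU2_inv[OF assms(1)] by blast
  have "trace (g ** X ** matrix_inv g) = trace (matrix_inv g ** (g ** X))" by (rule trace_mul_sym)
  also have "\<dots> = trace X" using \<open>matrix_inv g ** g = mat 1\<close> by (simp add: matrix_mul_assoc)
  finally show ?thesis .
qed

lemma norm_unique:
  assumes n1: "normalized (A,B,a,b)" and n2: "normalized (A',B',a',b')" and c: "conj_equiv (A,B,a,b) (A',B',a',b')"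
  shows "a' = a \<and> b' = b \<and> A' = A \<and> B' = B"
proof -
  obtain al be r where p1: "0 < be" "be < pi" "0 \<le> r" "r < 1"
    and A: "A = su2_of (r * cos al) (sqrt (1 - r\<^sup>2)) 0 (r * sin al)" and B: "B = su2_of (cos be) 0 0 (sin be)"
    using n1 unfolding normalized_def by auto
  obtain al' be' r' where p2: "0 < be'" "be' < pi" "0 \<le> r'" "r' < 1"
    and A': "A' = su2_of (r' * cos al') (sqrt (1 - r'\<^sup>2)) 0 (r' * sin al')" and B': "B' = su2_of (cos be') 0 0 (sin be')"
    using n2 unfolding normalized_def by auto
  obtain g where g: "g \<in> SU2" and e: "A' = g ** A ** matrix_inv g" "B' = g ** B ** matrix_inv g"
     "a' = g ** a ** matrix_inv g" "b' = g ** b ** matrix_inv g"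
    using c unfolding conj_equiv_def by auto
  obtain w x y z where u: "unit4 w x y z" and gq: "g = su2_of w x y z" using SU2_su2[OF g] by blast
  have "trace B' = trace B" using conj_trace[OF g] e(2) by simp
  hence "cos be' = cos be" unfolding B B' su2_trace by simp
  hence bb: "be' = be" using cos_inj_pi p1 p2 by auto
  have sb: "sin be > 0" using sin_gt_zero p1 by auto
  have "B' ** g = g ** B" by (rule conj_mul[OF g e(2)])
  hence "x = 0 \<and> y = 0" unfolding B B' gq bb su2_mult su2_eq using sb
    by (auto simp: algebra_simps)
  hence x: "x = 0" "y = 0" by auto
  define p where "p = sqrt (1 - r\<^sup>2)"
  define p' where "p' = sqrt (1 - r'\<^sup>2)"
  have "r * r \<le> r * 1" "r' * r' \<le> r' * 1" using p1 p2 by (intro mult_left_mono; simp)+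
  hence "r^2 < 1" "r'^2 < 1" using p1 p2 by (auto simp: power2_eq_square)
  hence pp: "p > 0" "p' > 0" unfolding p_def p'_def by auto
  have "A' ** g = g ** A" by (rule conj_mul[OF g e(1)])
  hence "z * (p + p') = 0" unfolding A A' gq x su2_mult su2_eq p_def[symmetric] p'_def[symmetric]
    by (auto simp: algebra_simps)
  hence z: "z = 0" using pp by auto
  have w: "w^2 = 1" using u unfolding unit4_def x z by simp
  have mi: "matrix_inv g = su2_of w 0 0 0" unfolding gq x z using su2_inv[OF u[unfolded x z]] by simp
  show ?thesis unfolding e mi unfolding gq x z using scal_conj[OF w] by simp
qed

lemma su2_neg: "- su2_of w x y z = su2_of (-w) (-x) (-y) (-z)"
  by (simp add: su2_of_mat2 mat2_def vec_eq_iff forall_2 algebra_simps)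

lemma P_form: "csc (complex_of_real c) (mat 1) + csc (\<i> * complex_of_real s) (csc (complex_of_real x) sx + csc (complex_of_real y) sy)
   = su2_of c (s*x) (s*y) 0"
  by (simp add: su2_of_mat2 mat2_def csc_def sx_def sy_def mat_def vec_eq_iff forall_2 complex_eq_iff)

lemma h_form: "csc (complex_of_real k) (csc \<i> (csc (complex_of_real x) sx - csc (complex_of_real z) sz))
   = su2_of 0 (k*x) 0 (-(k*z))"
  by (simp add: su2_of_mat2 mat2_def csc_def sx_def sz_def mat_def vec_eq_iff forall_2 complex_eq_iff)

lemma a_form: "csc \<i> sz = su2_of 0 0 0 1"
  by (simp add: su2_of_mat2 mat2_def csc_def sz_def mat_def vec_eq_iff forall_2 complex_eq_iff)

lemma Ls_form:
  assumes nu: "\<nu> = \<epsilon> * sin \<phi>" and D: "D = (cos \<nu>)\<^sup>2 + (sin \<nu>)\<^sup>2 * (sin \<theta>)\<^sup>2" "D > 0" and k: "k = 1 / sqrt D"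
  shows "Ls \<epsilon> \<phi> \<theta> = (su2_of 0 (k * cos \<nu>) 0 (- (k * (sin \<nu> * sin \<theta>))) ** su2_of (cos \<phi>) (sin \<phi> * cos \<theta>) (sin \<phi> * sin \<theta>) 0,
     su2_of (cos \<nu>) (sin \<nu> * cos \<theta>) (sin \<nu> * sin \<theta>) 0, su2_of 0 0 0 1,
     - (su2_of 0 (k * cos \<nu>) 0 (- (k * (sin \<nu> * sin \<theta>))) ** su2_of 0 0 0 (-1) ** su2_of 0 (-(k * cos \<nu>)) 0 (k * (sin \<nu> * sin \<theta>))))"
proof -
  have ku: "unit4 0 (k * cos \<nu>) 0 (- (k * (sin \<nu> * sin \<theta>)))"
  proof -
    have "k^2 * D = 1" using D k by (simp add: power_divide)
    thus ?thesis unfolding unit4_def D(1) by (simp add: power_mult_distrib algebra_simps)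
  qed
  have hs: "csc (complex_of_real (1 / sqrt D)) (csc \<i> (csc (complex_of_real (cos \<nu>)) sx - csc (complex_of_real (sin \<nu> * sin \<theta>)) sz))
     = su2_of 0 (k * cos \<nu>) 0 (- (k * (sin \<nu> * sin \<theta>)))"
    unfolding h_form k[symmetric] by (simp add: su2_of_mat2)
  show ?thesis
    unfolding Ls_def Let_def nu[symmetric] D(1)[symmetric] hs P_form a_form
    using su2_inv[OF ku] su2_inv[of 0 0 0 1] by (simp add: unit4_def)
qed

definition rotz :: "real \<Rightarrow> cmat" where "rotz t = su2_of (cos (t/2)) 0 0 (- sin (t/2))"
definition roty :: "real \<Rightarrow> cmat" where "roty t = su2_of (cos (t/2)) 0 (sin (t/2)) 0"

lemma rotz_SU2: "rotz t \<in> SU2" unfolding rotz_def by (rule su2_in_SU2) (simp add: unit4_def)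
lemma roty_SU2: "roty t \<in> SU2" unfolding roty_def by (rule su2_in_SU2) (simp add: unit4_def)

lemma rotz_conj: "rotz t ** su2_of a0 a1 a2 a3 ** matrix_inv (rotz t) =
   su2_of a0 (a1 * cos t - a2 * sin t) (a1 * sin t + a2 * cos t) a3"
proof -
  define c s where "c = cos (t/2)" "s = sin (t/2)"
  have u: "c^2 + s^2 = 1" unfolding c_s_def by simp
  have ct: "cos t = c^2 - s^2" "sin t = 2 * s * c" unfolding c_s_def
    using cos_double[of "t/2"] sin_double[of "t/2"] by (auto simp: power2_eq_square)
  have inv: "matrix_inv (rotz t) = su2_of c 0 0 s" unfolding rotz_def c_s_def[symmetric]
    using su2_inv[of c 0 0 "-s"] u by (simp add: unit4_def)
  show ?thesis unfolding inv unfolding rotz_def c_s_def[symmetric] su2_mult su2_eq ct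
    using u by algebra
qed

lemma roty_conj: "roty t ** su2_of a0 a1 a2 a3 ** matrix_inv (roty t) =
   su2_of a0 (a1 * cos t - a3 * sin t) a2 (a1 * sin t + a3 * cos t)"
proof -
  define c s where "c = cos (t/2)" "s = sin (t/2)"
  have u: "c^2 + s^2 = 1" unfolding c_s_def by simp
  have ct: "cos t = c^2 - s^2" "sin t = 2 * s * c" unfolding c_s_def
    using cos_double[of "t/2"] sin_double[of "t/2"] by (auto simp: power2_eq_square)
  have inv: "matrix_inv (roty t) = su2_of c 0 (-s) 0" unfolding roty_def c_s_def[symmetric]
    using su2_inv[of c 0 s 0] u by (simp add: unit4_def)
  show ?thesis unfolding inv unfolding roty_def c_s_def[symmetric] su2_mult su2_eq ct
    using u by algebra
qed

lemma Ls_explicit: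
  assumes nu: "\<nu> = \<epsilon> * sin \<phi>" and D: "D = (cos \<nu>)\<^sup>2 + (sin \<nu>)\<^sup>2 * (sin \<theta>)\<^sup>2" "D > 0" and k: "k = 1 / sqrt D"
  shows "Ls \<epsilon> \<phi> \<theta> = (su2_of (- (k * cos \<nu> * sin \<phi> * cos \<theta>))
       (k * cos \<nu> * cos \<phi> - k * sin \<nu> * sin \<theta> * sin \<phi> * sin \<theta>)
       (k * sin \<nu> * sin \<theta> * sin \<phi> * cos \<theta>)
       (- (k * sin \<nu> * sin \<theta> * cos \<phi>) - k * cos \<nu> * sin \<phi> * sin \<theta>),
     su2_of (cos \<nu>) (sin \<nu> * cos \<theta>) (sin \<nu> * sin \<theta>) 0, su2_of 0 0 0 1,
     su2_of 0 (- 2 * k^2 * sin \<nu> * cos \<nu> * sin \<theta>) 0 (2 * k^2 * (sin \<nu>)^2 * (sin \<theta>)^2 - 1))"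
proof -
  have kD: "k^2 * ((cos \<nu>)\<^sup>2 + (sin \<nu>)\<^sup>2 * (sin \<theta>)\<^sup>2) = 1" using D k by (simp add: power_divide)
  show ?thesis unfolding Ls_form[OF assms] su2_mult su2_neg prod.inject su2_eq
    using kD by (simp add: power2_eq_square algebra_simps)
qed

lemma conj3: assumes "g1 \<in> SU2" "g2 \<in> SU2" "g3 \<in> SU2"
  shows "(g3 ** g2 ** g1) ** X ** matrix_inv (g3 ** g2 ** g1) = g3 ** (g2 ** (g1 ** X ** matrix_inv g1) ** matrix_inv g2) ** matrix_inv g3"
  unfolding inv_prod[OF assms(1) SU2_mult[OF assms(3,2)]] inv_prod[OF assms(2,3)]
  by (simp add: matrix_mul_assoc)

lemma rot_all: "(rotz t3 ** roty t2 ** rotz t1) ** su2_of a0 a1 a2 a3 ** matrix_inv (rotz t3 ** roty t2 ** rotz t1)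
  = su2_of a0 (((a1 * cos t1 - a2 * sin t1) * cos t2 - a3 * sin t2) * cos t3 - (a1 * sin t1 + a2 * cos t1) * sin t3)
     (((a1 * cos t1 - a2 * sin t1) * cos t2 - a3 * sin t2) * sin t3 + (a1 * sin t1 + a2 * cos t1) * cos t3)
     ((a1 * cos t1 - a2 * sin t1) * sin t2 + a3 * cos t2)"
  unfolding conj3[OF rotz_SU2 roty_SU2 rotz_SU2] rotz_conj roty_conj ..

lemma tau_trig: assumes "s = (if \<theta> < pi then 1 else -1 :: real)" "\<tau> = (if \<theta> < pi then pi/2 - \<psi> else - (pi/2) - \<psi>)"
  shows "cos \<tau> = s * sin \<psi>" "sin \<tau> = s * cos \<psi>"
  using assms by (auto simp: cos_diff sin_diff)

lemma T0_conj:
  assumes nu: "\<nu> = \<epsilon> * sin \<phi>" and D: "D = (cos \<nu>)\<^sup>2 + (sin \<nu>)\<^sup>2 * (sin \<theta>)\<^sup>2" "D > 0" and k: "k = 1 / sqrt D"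
    and s: "s = (if \<theta> < pi then 1 else -1 :: real)"
  shows "conj_equiv (Ls \<epsilon> \<phi> \<theta>) (su2_of (- (k * cos \<nu> * sin \<phi> * cos \<theta>)) (k * s * sin \<theta>) 0 (k * cos \<phi> * cos \<nu> * cos \<theta>),
     su2_of (cos \<nu>) 0 0 (sin \<nu>),
     su2_of 0 (- s * sin (\<phi> + \<nu>)) (- s * cos (\<phi> + \<nu>)) 0,
     su2_of 0 (s * ((cos \<nu>)\<^sup>2 * (cos \<theta>)\<^sup>2 * sin (\<phi> + \<nu>) + (sin \<theta>)\<^sup>2 * sin (\<phi> - \<nu>)) / D)
              (s * ((cos \<nu>)\<^sup>2 * (cos \<theta>)\<^sup>2 * cos (\<phi> + \<nu>) + (sin \<theta>)\<^sup>2 * cos (\<phi> - \<nu>)) / D)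
              (- (1/2) * sin (2 * \<nu>) * sin (2 * \<theta>) / D))"
proof -
  define \<tau> where "\<tau> = (if \<theta> < pi then pi/2 - (\<phi> + \<nu>) else - (pi/2) - (\<phi> + \<nu>))"
  note ct = tau_trig[OF s \<tau>_def]
  have kD: "k^2 * ((cos \<nu>)\<^sup>2 + (sin \<nu>)\<^sup>2 * (sin \<theta>)\<^sup>2) = 1" using D k by (simp add: power_divide)
  have s2: "s^2 = 1" using s by auto
  have Dn: "D \<noteq> 0" using D by auto
  have divD: "\<And>x. x / D = x * k^2" using D k by (simp add: power_divide)
  have t1: "(sin \<theta>)^2 + (cos \<theta>)^2 = 1" "(sin \<phi>)^2 + (cos \<phi>)^2 = 1" "(sin \<nu>)^2 + (cos \<nu>)^2 = 1" by simp_all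
  show ?thesis unfolding conj_equiv_def Ls_explicit[OF assms(1-4)] prod.case
    apply (rule bexI[of _ "rotz \<tau> ** roty (pi/2) ** rotz (-\<theta>)"])
    unfolding rot_all cos_minus sin_minus ct cos_pi_half sin_pi_half su2_eq
     apply (simp only: sin_add cos_add sin_diff cos_diff sin_double mult_zero_right mult_zero_left diff_zero add_0_right add_0_left mult_1_right)
     apply (intro conjI)
    using t1 s2 kD Dn apply (simp_all add: field_simps; algebra)+
    using t1 s2 kD apply (simp_all only: divD; algebra)+
    apply (simp add: divD algebra_simps)
  by (intro SU2_mult rotz_SU2 roty_SU2)
qed

lemma comm_core:
  assumes "u^2+v^2=1" "cn^2+sn^2=1" "ct^2+st^2=1" "v * cn = u * sn * st"
  shows "su2_of 0 u 0 (-v) ** su2_of cn (sn * ct) (sn * st) 0 ** su2_of 0 (-u) 0 v ** su2_of cn (-(sn * ct)) (-(sn * st)) 0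
     ** su2_of 0 0 0 1 ** (- (su2_of 0 u 0 (-v) ** su2_of 0 0 0 (-1) ** su2_of 0 (-u) 0 v)) = mat 1"
  unfolding su2_mult su2_neg su2_one[symmetric] su2_eq
  using assms by (simp only: mult_zero_left mult_zero_right add_0_left add_0_right diff_zero minus_zero) algebra

lemma Ls_inR:
  assumes nu: "\<nu> = \<epsilon> * sin \<phi>" and D: "D = (cos \<nu>)\<^sup>2 + (sin \<nu>)\<^sup>2 * (sin \<theta>)\<^sup>2" "D > 0" and k: "k = 1 / sqrt D"
  shows "in_R (Ls \<epsilon> \<phi> \<theta>)"
proof -
  have kD: "k^2 * ((cos \<nu>)\<^sup>2 + (sin \<nu>)\<^sup>2 * (sin \<theta>)\<^sup>2) = 1" using D k by (simp add: power_divide)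
  have t1: "(sin \<theta>)^2 + (cos \<theta>)^2 = 1" "(sin \<phi>)^2 + (cos \<phi>)^2 = 1" "(sin \<nu>)^2 + (cos \<nu>)^2 = 1" by simp_all
  define h where "h = su2_of 0 (k * cos \<nu>) 0 (- (k * (sin \<nu> * sin \<theta>)))"
  define P where "P = su2_of (cos \<phi>) (sin \<phi> * cos \<theta>) (sin \<phi> * sin \<theta>) 0"
  define B where "B = su2_of (cos \<nu>) (sin \<nu> * cos \<theta>) (sin \<nu> * sin \<theta>) 0"
  have uh: "unit4 0 (k * cos \<nu>) 0 (- (k * (sin \<nu> * sin \<theta>)))"
    unfolding unit4_def using kD by (simp add: power_mult_distrib algebra_simps)
  have uP: "unit4 (cos \<phi>) (sin \<phi> * cos \<theta>) (sin \<phi> * sin \<theta>) 0"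
    unfolding unit4_def using t1 by (simp only: power_zero_numeral add_0_right) algebra
  have uB: "unit4 (cos \<nu>) (sin \<nu> * cos \<theta>) (sin \<nu> * sin \<theta>) 0"
    unfolding unit4_def using t1 by (simp only: power_zero_numeral add_0_right) algebra
  have ua: "unit4 0 0 0 1" by (simp add: unit4_def)
  have hS: "h \<in> SU2" "P \<in> SU2" "B \<in> SU2" "su2_of 0 0 0 1 \<in> SU2"
    unfolding h_def P_def B_def using su2_in_SU2 uh uP uB ua by auto
  have PB: "P ** B = B ** P" unfolding P_def B_def su2_mult su2_eq by (simp add: algebra_simps)
  have PBP: "P ** B ** matrix_inv P = B"
  proof -
    have "P ** B ** matrix_inv P = B ** (P ** matrix_inv P)" unfolding PB by (simp add: matrix_mul_assoc)
    moreover have "P ** matrix_inv P = mat 1" using SU2_inv[OF hS(2)] by blast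
    ultimately show ?thesis by simp
  qed
  have cAB: "comm (h ** P) B = h ** B ** matrix_inv h ** matrix_inv B"
  proof -
    have "comm (h ** P) B = h ** (P ** B ** matrix_inv P) ** matrix_inv h ** matrix_inv B"
      unfolding comm_def inv_prod[OF hS(2,1)] by (simp add: matrix_mul_assoc)
    thus ?thesis unfolding PBP .
  qed
  have core: "h ** B ** matrix_inv h ** matrix_inv B ** su2_of 0 0 0 1 **
      (- (h ** su2_of 0 0 0 (-1) ** su2_of 0 (- (k * cos \<nu>)) 0 (k * (sin \<nu> * sin \<theta>)))) = mat 1"
    unfolding h_def B_def su2_inv[OF uh] su2_inv[OF uB] minus_zero minus_minus
    apply (rule comm_core)
    using kD t1 by (auto simp: power_mult_distrib algebra_simps)
  have bS: "- (h ** su2_of 0 0 0 (-1) ** su2_of 0 (- (k * cos \<nu>)) 0 (k * (sin \<nu> * sin \<theta>))) \<in> SU2"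
    unfolding h_def su2_mult su2_neg
    apply (rule su2_in_SU2) unfolding unit4_def using kD t1
    by (simp only: mult_zero_left mult_zero_right add_0_left add_0_right diff_zero minus_zero power_zero_numeral) algebra
  show ?thesis unfolding in_R_def Ls_form[OF assms] prod.case h_def[symmetric] P_def[symmetric] B_def[symmetric]
    unfolding cAB using core hS bS SU2_mult[OF hS(1,2)]
    apply (intro conjI; (simp; fail)?)
    by (simp_all add: h_def su2_mult su2_neg su2_trace)
qed

lemma Ls_mu:
  assumes nu: "\<nu> = \<epsilon> * sin \<phi>" and D: "D = (cos \<nu>)\<^sup>2 + (sin \<nu>)\<^sup>2 * (sin \<theta>)\<^sup>2" "D > 0" and k: "k = 1 / sqrt D"
  shows "mu (Ls \<epsilon> \<phi> \<theta>) = 1 - 2 * k^2 * (sin \<nu>)^2 * (sin \<theta>)^2"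
proof -
  obtain A B a b where L: "Ls \<epsilon> \<phi> \<theta> = (A,B,a,b)" by (cases "Ls \<epsilon> \<phi> \<theta>") auto
  have R: "comm A B ** a ** b = mat 1" "a \<in> SU2" "b \<in> SU2" using Ls_inR[OF assms] unfolding L in_R_def by auto
  have ab: "a = su2_of 0 0 0 1" "b = su2_of 0 (- 2 * k^2 * sin \<nu> * cos \<nu> * sin \<theta>) 0 (2 * k^2 * (sin \<nu>)^2 * (sin \<theta>)^2 - 1)"
    using Ls_explicit[OF assms] unfolding L by auto
  have X: "a ** b \<in> SU2" using SU2_mult R by blast
  have "comm A B = comm A B ** (a ** b) ** matrix_inv (a ** b)"
    using SU2_inv[OF X] by (metis matrix_mul_assoc matrix_mul_rid)
  also have "\<dots> = matrix_inv (a ** b)" using R(1) by (simp add: matrix_mul_assoc)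
  also have "\<dots> = ctrans (a ** b)" using SU2_inv[OF X] by blast
  finally have "comm A B = ctrans (a ** b)" .
  thus ?thesis unfolding L mu_def prod.case ab su2_mult su2_ctrans by (simp add: su2_trace)
qed

lemma T0_normalized:
  assumes nu: "\<nu> = \<epsilon> * sin \<phi>" and D: "D = (cos \<nu>)\<^sup>2 + (sin \<nu>)\<^sup>2 * (sin \<theta>)\<^sup>2" "D > 0" and k: "k = 1 / sqrt D"
    and s: "s = (if \<theta> < pi then 1 else -1 :: real)" and ssin: "s * sin \<theta> > 0" and nub: "0 < \<nu>" "\<nu> < pi"
  shows "normalized (su2_of (- (k * cos \<nu> * sin \<phi> * cos \<theta>)) (k * s * sin \<theta>) 0 (k * cos \<phi> * cos \<nu> * cos \<theta>),
     su2_of (cos \<nu>) 0 0 (sin \<nu>), X, Y)"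
proof -
  have kD: "k^2 * ((cos \<nu>)\<^sup>2 + (sin \<nu>)\<^sup>2 * (sin \<theta>)\<^sup>2) = 1" using D k by (simp add: power_divide)
  have kp: "k > 0" using D k by simp
  define x where "x = - (k * cos \<nu> * sin \<phi> * cos \<theta>)"
  define y where "y = k * cos \<phi> * cos \<nu> * cos \<theta>"
  define r where "r = sqrt (x^2 + y^2)"
  have s2: "s^2 = 1" using s by auto
  have r2: "r^2 = x^2+y^2" unfolding r_def by simp
  have xy: "x^2 + y^2 = k^2 * (cos \<nu>)^2 * (cos \<theta>)^2"
    unfolding x_def y_def using sin_cos_squared_add[of \<phi>] by algebra
  have "1 - r^2 = (k * s * sin \<theta>)^2"
    unfolding r2 xy using kD s2 sin_cos_squared_add[of \<nu>] sin_cos_squared_add[of \<theta>] by algebra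
  moreover have "k * s * sin \<theta> > 0" using kp ssin by (simp add: mult.assoc)
  ultimately have sq: "sqrt (1 - r^2) = k * s * sin \<theta>" by simp
  have "(k * s * sin \<theta>)^2 > 0" using \<open>k * s * sin \<theta> > 0\<close> by (intro zero_less_power) simp
  hence rl: "r < 1" using \<open>1 - r^2 = _\<close> r_def by (smt (verit) one_le_power)
  have r0: "r \<ge> 0" unfolding r_def by simp
  obtain al where al: "0 \<le> al" "al \<le> 2*pi" "x = r * cos al" "y = r * sin al"
  proof (cases "r = 0")
    case True
    hence "x = 0" "y = 0" using r2 by (auto simp: sum_power2_eq_zero_iff)
    thus ?thesis using that[of 0] True by auto
  next
    case False
    hence rp: "r > 0" using r0 by simp
    have "(x/r)^2 + (y/r)^2 = (x^2+y^2)/r^2" by (simp add: power_divide add_divide_distrib)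
    also have "\<dots> = 1" unfolding r2[symmetric] using rp by simp
    finally have "(x/r)^2 + (y/r)^2 = 1" .
    then obtain t where "0 \<le> t" "t < 2*pi" "x/r = cos t" "y/r = sin t" by (rule sincos_total_2pi)
    thus ?thesis using that[of t] rp by (auto simp: field_simps)
  qed
  show ?thesis unfolding normalized_def prod.case
    apply (rule exI[of _ al], rule exI[of _ \<nu>], rule exI[of _ r])
    using al nub r0 rl sq x_def y_def by auto
qed

lemma basics:
  assumes e: "0 < \<epsilon>" "\<epsilon> < 1" and ph: "\<phi> \<in> {0<..<pi}" and th: "\<theta> \<in> {0<..<pi} \<union> {pi<..<2*pi}"
    and nu: "\<nu> = \<epsilon> * sin \<phi>" and D: "D = (cos \<nu>)\<^sup>2 + (sin \<nu>)\<^sup>2 * (sin \<theta>)\<^sup>2"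
    and s: "s = (if \<theta> < pi then 1 else -1 :: real)"
  shows "0 < \<nu>" "\<nu> < 1" "\<nu> < pi" "D > 0" "s * sin \<theta> > 0" "cos \<nu> > 0" "sin \<nu> > 0" "sin \<phi> > 0"
proof -
  have sp: "sin \<phi> > 0" "sin \<phi> \<le> 1" using ph sin_gt_zero by auto
  show nu0: "0 < \<nu>" using e sp nu by simp
  have "\<nu> \<le> \<epsilon>" using e sp nu by (simp add: mult_le_cancel_left1)
  thus nu1: "\<nu> < 1" using e by simp
  have pi2: "1 < pi/2" using pi_gt3 by simp
  show "\<nu> < pi" using nu1 pi_gt3 by simp
  show cp: "cos \<nu> > 0" using nu0 nu1 pi2 by (intro cos_gt_zero) auto
  show "D > 0" unfolding D using cp by (intro add_pos_nonneg) auto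
  show "sin \<nu> > 0" using nu0 nu1 pi_gt3 by (intro sin_gt_zero) auto
  show "sin \<phi> > 0" by (rule sp(1))
  show "s * sin \<theta> > 0"
  proof (cases "\<theta> < pi")
    case True thus ?thesis using th s sin_gt_zero by auto
  next
    case False
    hence "\<theta> - pi > 0" "\<theta> - pi < pi" using th by auto
    hence "sin (\<theta> - pi) > 0" by (rule sin_gt_zero)
    thus ?thesis using False s by (simp add: sin_diff)
  qed
qed

lemma conj_sym': "conj_equiv t t' \<Longrightarrow> conj_equiv t' t"
  by (cases t rule: prod_cases4, cases t' rule: prod_cases4) (simp add: conj_sym)

lemma conj_trans': "conj_equiv t t' \<Longrightarrow> conj_equiv t' t'' \<Longrightarrow> conj_equiv t t''"
  apply (cases t rule: prod_cases4, cases t' rule: prod_cases4, cases t'' rule: prod_cases4)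
  using conj_trans by blast

lemma norm_unique': "normalized t \<Longrightarrow> normalized t' \<Longrightarrow> conj_equiv t t' \<Longrightarrow> t' = t"
  apply (cases t rule: prod_cases4, cases t' rule: prod_cases4)
  using norm_unique by fastforce

definition T0 :: "real \<Rightarrow> real \<Rightarrow> real \<Rightarrow> tuple4" where
  "T0 \<epsilon> \<phi> \<theta> = (let \<nu> = \<epsilon> * sin \<phi>; D = (cos \<nu>)\<^sup>2 + (sin \<nu>)\<^sup>2 * (sin \<theta>)\<^sup>2; k = 1 / sqrt D;
      s = (if \<theta> < pi then 1 else -1 :: real) in
    (su2_of (- (k * cos \<nu> * sin \<phi> * cos \<theta>)) (k * s * sin \<theta>) 0 (k * cos \<phi> * cos \<nu> * cos \<theta>),
     su2_of (cos \<nu>) 0 0 (sin \<nu>),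
     su2_of 0 (- s * sin (\<phi> + \<nu>)) (- s * cos (\<phi> + \<nu>)) 0,
     su2_of 0 (s * ((cos \<nu>)\<^sup>2 * (cos \<theta>)\<^sup>2 * sin (\<phi> + \<nu>) + (sin \<theta>)\<^sup>2 * sin (\<phi> - \<nu>)) / D)
              (s * ((cos \<nu>)\<^sup>2 * (cos \<theta>)\<^sup>2 * cos (\<phi> + \<nu>) + (sin \<theta>)\<^sup>2 * cos (\<phi> - \<nu>)) / D)
              (- (1/2) * sin (2 * \<nu>) * sin (2 * \<theta>) / D)))"

lemma T0_props:
  assumes e: "0 < \<epsilon>" "\<epsilon> < 1" and ph: "\<phi> \<in> {0<..<pi}" and th: "\<theta> \<in> {0<..<pi} \<union> {pi<..<2*pi}"
  shows "conj_equiv (Ls \<epsilon> \<phi> \<theta>) (T0 \<epsilon> \<phi> \<theta>)" "normalized (T0 \<epsilon> \<phi> \<theta>)" "in_P4 (Ls \<epsilon> \<phi> \<theta>)"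
proof -
  define \<nu> where "\<nu> = \<epsilon> * sin \<phi>"
  define D where "D = (cos \<nu>)\<^sup>2 + (sin \<nu>)\<^sup>2 * (sin \<theta>)\<^sup>2"
  define k where "k = 1 / sqrt D"
  define s where "s = (if \<theta> < pi then 1 else -1 :: real)"
  note b = basics[OF e ph th \<nu>_def D_def s_def]
  have T: "T0 \<epsilon> \<phi> \<theta> = (su2_of (- (k * cos \<nu> * sin \<phi> * cos \<theta>)) (k * s * sin \<theta>) 0 (k * cos \<phi> * cos \<nu> * cos \<theta>),
     su2_of (cos \<nu>) 0 0 (sin \<nu>),
     su2_of 0 (- s * sin (\<phi> + \<nu>)) (- s * cos (\<phi> + \<nu>)) 0,
     su2_of 0 (s * ((cos \<nu>)\<^sup>2 * (cos \<theta>)\<^sup>2 * sin (\<phi> + \<nu>) + (sin \<theta>)\<^sup>2 * sin (\<phi> - \<nu>)) / D)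
              (s * ((cos \<nu>)\<^sup>2 * (cos \<theta>)\<^sup>2 * cos (\<phi> + \<nu>) + (sin \<theta>)\<^sup>2 * cos (\<phi> - \<nu>)) / D)
              (- (1/2) * sin (2 * \<nu>) * sin (2 * \<theta>) / D))"
    unfolding T0_def Let_def \<nu>_def[symmetric] D_def[symmetric] k_def[symmetric] s_def[symmetric] ..
  show "conj_equiv (Ls \<epsilon> \<phi> \<theta>) (T0 \<epsilon> \<phi> \<theta>)" unfolding T
    by (rule T0_conj[OF \<nu>_def D_def b(4) k_def s_def])
  show "normalized (T0 \<epsilon> \<phi> \<theta>)" unfolding T
    by (rule T0_normalized[OF \<nu>_def D_def b(4) k_def s_def b(5) b(1) b(3)])
  have kp: "k > 0" using b(4) k_def by simp
  have kD: "k^2 * ((cos \<nu>)\<^sup>2 + (sin \<nu>)\<^sup>2 * (sin \<theta>)\<^sup>2) = 1" using b(4) k_def D_def by (simp add: power_divide)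
  have sth: "sin \<theta> \<noteq> 0" using b(5) by auto
  have pos: "k^2 * (sin \<nu>)^2 * (sin \<theta>)^2 > 0" using kp b(7) sth by simp
  have le: "k^2 * (sin \<nu>)^2 * (sin \<theta>)^2 \<le> 1" using kD
    by (smt (verit, best) distrib_left mult.assoc zero_le_power2 mult_nonneg_nonneg)
  show "in_P4 (Ls \<epsilon> \<phi> \<theta>)" unfolding in_P4_def Ls_mu[OF \<nu>_def D_def b(4) k_def]
    using Ls_inR[OF \<nu>_def D_def b(4) k_def] pos le by auto
qed

lemma cos_eq1: "\<bar>x\<bar> < pi \<Longrightarrow> cos x = 1 \<Longrightarrow> x = 0"
  using cos_inj_pi[of "\<bar>x\<bar>" 0] by (simp add: cos_abs_real)

lemma cos_neq_m1: "\<bar>x\<bar> < pi \<Longrightarrow> cos x \<noteq> -1"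
  using cos_inj_pi[of "\<bar>x\<bar>" pi] by (auto simp: cos_abs_real)

lemma T0_inj:
  assumes e: "0 < \<epsilon>" "\<epsilon> < 1" and ph: "\<phi> \<in> {0<..<pi}" and th: "\<theta> \<in> {0<..<pi} \<union> {pi<..<2*pi}"
    and ph': "\<phi>' \<in> {0<..<pi}" and th': "\<theta>' \<in> {0<..<pi} \<union> {pi<..<2*pi}"
    and eq: "T0 \<epsilon> \<phi>' \<theta>' = T0 \<epsilon> \<phi> \<theta>"
  shows "\<phi> = \<phi>' \<and> \<theta> = \<theta>'"
proof -
  define \<nu> where "\<nu> = \<epsilon> * sin \<phi>"
  define D where "D = (cos \<nu>)\<^sup>2 + (sin \<nu>)\<^sup>2 * (sin \<theta>)\<^sup>2"
  define k where "k = 1 / sqrt D"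
  define s where "s = (if \<theta> < pi then 1 else -1 :: real)"
  note b = basics[OF e ph th \<nu>_def D_def s_def]
  define \<nu>' where "\<nu>' = \<epsilon> * sin \<phi>'"
  define D' where "D' = (cos \<nu>')\<^sup>2 + (sin \<nu>')\<^sup>2 * (sin \<theta>')\<^sup>2"
  define k' where "k' = 1 / sqrt D'"
  define s' where "s' = (if \<theta>' < pi then 1 else -1 :: real)"
  note b' = basics[OF e ph' th' \<nu>'_def D'_def s'_def]
  have E: "cos \<nu>' = cos \<nu>" "- s' * sin (\<phi>' + \<nu>') = - s * sin (\<phi> + \<nu>)" "- s' * cos (\<phi>' + \<nu>') = - s * cos (\<phi> + \<nu>)"
    "k' * cos \<nu>' * sin \<phi>' * cos \<theta>' = k * cos \<nu> * sin \<phi> * cos \<theta>"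
    "k' * s' * sin \<theta>' = k * s * sin \<theta>"
    using eq unfolding T0_def Let_def \<nu>_def[symmetric] D_def[symmetric] k_def[symmetric] s_def[symmetric]
      \<nu>'_def[symmetric] D'_def[symmetric] k'_def[symmetric] s'_def[symmetric] prod.inject su2_eq by auto
  have nn: "\<nu>' = \<nu>" using cos_inj_pi[of \<nu>' \<nu>] E(1) b(1,3) b'(1,3) by auto
  have ss: "s^2 = 1" "s'^2 = 1" unfolding s_def s'_def by auto
  have "s * s' * cos (\<phi> - \<phi>') = (s' * cos (\<phi>' + \<nu>'))^2 + (s' * sin (\<phi>' + \<nu>'))^2"
  proof -
    have "\<phi> - \<phi>' = (\<phi> + \<nu>) - (\<phi>' + \<nu>')" using nn by simp
    hence "s * s' * cos (\<phi> - \<phi>') = s * s' * cos ((\<phi> + \<nu>) - (\<phi>' + \<nu>'))" by simp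
    also have "\<dots> = (s * cos (\<phi> + \<nu>)) * (s' * cos (\<phi>' + \<nu>')) + (s * sin (\<phi> + \<nu>)) * (s' * sin (\<phi>' + \<nu>'))"
      by (simp only: cos_diff[of "\<phi> + \<nu>"]) (simp add: algebra_simps)
    finally have "s * s' * cos (\<phi> - \<phi>') = (s * cos (\<phi> + \<nu>)) * (s' * cos (\<phi>' + \<nu>')) + (s * sin (\<phi> + \<nu>)) * (s' * sin (\<phi>' + \<nu>'))" .
    also have "\<dots> = (s' * cos (\<phi>' + \<nu>'))^2 + (s' * sin (\<phi>' + \<nu>'))^2" using E(2,3) by (simp add: power2_eq_square)
    finally show ?thesis .
  qed
  also have "\<dots> = 1" using ss(2) by (simp add: power_mult_distrib algebra_simps)
  finally have c1: "s * s' * cos (\<phi> - \<phi>') = 1" .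
  have ad: "\<bar>\<phi> - \<phi>'\<bar> < pi" using ph ph' by auto
  have ssv: "s * s' = 1 \<or> s * s' = -1" unfolding s_def s'_def by auto
  have sp: "s * s' = 1" using c1 ssv cos_neq_m1[OF ad] by auto
  hence "cos (\<phi> - \<phi>') = 1" using c1 by simp
  hence pp: "\<phi> = \<phi>'" using cos_eq1[OF ad] by simp
  have sv: "s' = s" using sp ss unfolding s_def s'_def by (auto split: if_splits)
  have c2: "k' * cos \<theta>' = k * cos \<theta>" using E(4) pp nn b(6,8) by simp
  have c3: "k' * sin \<theta>' = k * sin \<theta>" using E(5) sv s_def by (auto split: if_splits)
  have kp: "k > 0" "k' > 0" using b(4) b'(4) k_def k'_def by auto
  have "k * k' * sin (\<theta> - \<theta>') = (k * sin \<theta>) * (k' * cos \<theta>') - (k * cos \<theta>) * (k' * sin \<theta>')"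
    by (simp add: sin_diff algebra_simps)
  also have "\<dots> = 0" unfolding c2 c3 by simp
  finally have "sin (\<theta> - \<theta>') = 0" using kp by simp
  moreover have "\<bar>\<theta> - \<theta>'\<bar> < pi" using th th' sv unfolding s_def s'_def by (auto split: if_splits)
  ultimately have "\<theta> = \<theta>'" using sin_eq_0_pi[of "\<theta> - \<theta>'"] by auto
  thus ?thesis using pp by simp
qed

theorem theorem2p15:
  shows "\<exists>\<epsilon>0 > 0. \<forall>\<epsilon>. 0 < \<epsilon> \<and> \<epsilon> < \<epsilon>0 \<longrightarrow>
    (\<forall>\<phi> \<theta> \<phi>' \<theta>'. \<phi> \<in> {0<..<pi} \<and> \<theta> \<in> {0<..<pi} \<union> {pi<..<2*pi} \<and>
        \<phi>' \<in> {0<..<pi} \<and> \<theta>' \<in> {0<..<pi} \<union> {pi<..<2*pi} \<and>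
        conj_equiv (Ls \<epsilon> \<phi> \<theta>) (Ls \<epsilon> \<phi>' \<theta>') \<longrightarrow> \<phi> = \<phi>' \<and> \<theta> = \<theta>') \<and>
    (\<forall>\<phi> \<theta>. \<phi> \<in> {0<..<pi} \<and> \<theta> \<in> {0<..<pi} \<union> {pi<..<2*pi} \<longrightarrow>
        in_P4 (Ls \<epsilon> \<phi> \<theta>) \<and>
        (let \<nu> = \<epsilon> * sin \<phi>; D = (cos \<nu>)\<^sup>2 + (sin \<nu>)\<^sup>2 * (sin \<theta>)\<^sup>2;
             s = (if \<theta> < pi then 1 else -1 :: real);
             ah = (- s * sin (\<phi> + \<nu>), - s * cos (\<phi> + \<nu>), 0 :: real);
             bh = (s * ((cos \<nu>)\<^sup>2 * (cos \<theta>)\<^sup>2 * sin (\<phi> + \<nu>) + (sin \<theta>)\<^sup>2 * sin (\<phi> - \<nu>)) / D,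
                   s * ((cos \<nu>)\<^sup>2 * (cos \<theta>)\<^sup>2 * cos (\<phi> + \<nu>) + (sin \<theta>)\<^sup>2 * cos (\<phi> - \<nu>)) / D,
                   - (1/2) * sin (2 * \<nu>) * sin (2 * \<theta>) / D)
         in (\<exists>A B. normalized (A, B, su2_of 0 (fst ah) (fst (snd ah)) (snd (snd ah)),
                                   su2_of 0 (fst bh) (fst (snd bh)) (snd (snd bh)))
                 \<and> conj_equiv (Ls \<epsilon> \<phi> \<theta>) (A, B, su2_of 0 (fst ah) (fst (snd ah)) (snd (snd ah)),
                                   su2_of 0 (fst bh) (fst (snd bh)) (snd (snd bh)))) \<and>
            (\<forall>A B a b. normalized (A, B, a, b) \<and> conj_equiv (Ls \<epsilon> \<phi> \<theta>) (A, B, a, b) \<longrightarrow>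
                 a = su2_of 0 (fst ah) (fst (snd ah)) (snd (snd ah)) \<and>
                 b = su2_of 0 (fst bh) (fst (snd bh)) (snd (snd bh)))))"
  apply (rule exI[of _ 1])
  apply (rule conjI, simp)
  apply (rule allI, rule impI, rule conjI)
  subgoal for \<epsilon>
  proof -
  assume "0 < \<epsilon> \<and> \<epsilon> < 1"
  hence e: "0 < \<epsilon>" "\<epsilon> < 1" by auto
  show ?thesis
  proof (intro allI impI)
    fix \<phi> \<theta> \<phi>' \<theta>' assume H: "\<phi> \<in> {0<..<pi} \<and> \<theta> \<in> {0<..<pi} \<union> {pi<..<2*pi} \<and>
        \<phi>' \<in> {0<..<pi} \<and> \<theta>' \<in> {0<..<pi} \<union> {pi<..<2*pi} \<and>
        conj_equiv (Ls \<epsilon> \<phi> \<theta>) (Ls \<epsilon> \<phi>' \<theta>')"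
    hence h: "\<phi> \<in> {0<..<pi}" "\<theta> \<in> {0<..<pi} \<union> {pi<..<2*pi}" "\<phi>' \<in> {0<..<pi}" "\<theta>' \<in> {0<..<pi} \<union> {pi<..<2*pi}"
       "conj_equiv (Ls \<epsilon> \<phi> \<theta>) (Ls \<epsilon> \<phi>' \<theta>')" by auto
    note P = T0_props[OF e h(1,2)] and P' = T0_props[OF e h(3,4)]
    have "conj_equiv (T0 \<epsilon> \<phi> \<theta>) (T0 \<epsilon> \<phi>' \<theta>')"
      by (rule conj_trans'[OF conj_sym'[OF P(1)] conj_trans'[OF h(5) P'(1)]])
    hence "T0 \<epsilon> \<phi>' \<theta>' = T0 \<epsilon> \<phi> \<theta>" using norm_unique' P(2) P'(2) by blast
    thus "\<phi> = \<phi>' \<and> \<theta> = \<theta>'" by (rule T0_inj[OF e h(1-4)])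
  qed
  qed
  subgoal for \<epsilon>
  proof (intro allI impI conjI)
  fix \<phi> \<theta> :: real assume e0: "0 < \<epsilon> \<and> \<epsilon> < 1"
    and H: "\<phi> \<in> {0<..<pi} \<and> \<theta> \<in> {0<..<pi} \<union> {pi<..<2*pi}"
  hence e: "0 < \<epsilon>" "\<epsilon> < 1" and h: "\<phi> \<in> {0<..<pi}" "\<theta> \<in> {0<..<pi} \<union> {pi<..<2*pi}" by auto
  note P = T0_props[OF e h]
  show "in_P4 (Ls \<epsilon> \<phi> \<theta>)" by (rule P(3))
  have U: "\<And>A B a b. normalized (A, B, a, b) \<and> conj_equiv (Ls \<epsilon> \<phi> \<theta>) (A, B, a, b) \<Longrightarrow> (A, B, a, b) = T0 \<epsilon> \<phi> \<theta>"
  proof -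
    fix A B a b assume N: "normalized (A, B, a, b) \<and> conj_equiv (Ls \<epsilon> \<phi> \<theta>) (A, B, a, b)"
    have "conj_equiv (T0 \<epsilon> \<phi> \<theta>) (A, B, a, b)" using conj_trans'[OF conj_sym'[OF P(1)]] N by blast
    thus "(A, B, a, b) = T0 \<epsilon> \<phi> \<theta>" using norm_unique' P(2) N by blast
  qed
  show "let \<nu> = \<epsilon> * sin \<phi>; D = (cos \<nu>)\<^sup>2 + (sin \<nu>)\<^sup>2 * (sin \<theta>)\<^sup>2;
             s = (if \<theta> < pi then 1 else -1 :: real);
             ah = (- s * sin (\<phi> + \<nu>), - s * cos (\<phi> + \<nu>), 0 :: real);
             bh = (s * ((cos \<nu>)\<^sup>2 * (cos \<theta>)\<^sup>2 * sin (\<phi> + \<nu>) + (sin \<theta>)\<^sup>2 * sin (\<phi> - \<nu>)) / D,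
                   s * ((cos \<nu>)\<^sup>2 * (cos \<theta>)\<^sup>2 * cos (\<phi> + \<nu>) + (sin \<theta>)\<^sup>2 * cos (\<phi> - \<nu>)) / D,
                   - (1/2) * sin (2 * \<nu>) * sin (2 * \<theta>) / D)
         in (\<exists>A B. normalized (A, B, su2_of 0 (fst ah) (fst (snd ah)) (snd (snd ah)),
                                   su2_of 0 (fst bh) (fst (snd bh)) (snd (snd bh)))
                 \<and> conj_equiv (Ls \<epsilon> \<phi> \<theta>) (A, B, su2_of 0 (fst ah) (fst (snd ah)) (snd (snd ah)),
                                   su2_of 0 (fst bh) (fst (snd bh)) (snd (snd bh)))) \<and>
            (\<forall>A B a b. normalized (A, B, a, b) \<and> conj_equiv (Ls \<epsilon> \<phi> \<theta>) (A, B, a, b) \<longrightarrow>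
                 a = su2_of 0 (fst ah) (fst (snd ah)) (snd (snd ah)) \<and>
                 b = su2_of 0 (fst bh) (fst (snd bh)) (snd (snd bh)))"
    unfolding Let_def fst_conv snd_conv
    apply (intro conjI allI impI)
      apply (use P(1,2) in \<open>unfold T0_def Let_def, blast\<close>)
     apply (drule U, simp add: T0_def Let_def)+
    done
  qed
  done

end
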